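(* Let $\mathcal{H}$ be the Hilbert matrix operator on the Korenblum space $H^\infty_\alpha$. If $0<\alpha\le 2/3$, then $$\|\mathcal{H}\|_{H^\infty_\alpha\to H^\infty_\alpha}=\frac{\pi}{\sin(\alpha\pi)}.$$ If $2/3<\alpha<1$, then $$\|\mathcal{H}\|_{H^\infty_\alpha\to H^\infty_\alpha}\le \int_0^{\frac{3\alpha-2}{4\alpha-2}} G_t(x_0(t))\,dt+\int_{\frac{3\alpha-2}{4\alpha-2}}^1 t^{\alpha-1}(1-t)^{-\alpha}\,dt,$$ where, for $0<t<1$, $$G_t(x)=(1-x)^{2\alpha-1}\left(\frac{1-\left|\frac{x}{1-t}\right|^2}{(1-x)^2-t^2}\right)^{\alpha},\qquad x_0(t)=\frac{\alpha+2\alpha t-t-\sqrt{4\alpha^2t-2\alpha t+\alpha^2-2\alpha+1}}{2\alpha-1}.$$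
   Context: $\mathbb D=\{z\in\mathbb C:|z|<1\}$. For $0<\alpha<1$, the Korenblum space is $H^\infty_\alpha=\{f \text{ analytic on } \mathbb D: \|f\|_{H^\infty_\alpha}=\sup_{z\in\mathbb D}(1-|z|^2)^\alpha|f(z)|<\infty\}$. The Hilbert matrix operator acts on $f(z)=\sum_{k\ge0}a_kz^k$ by $\mathcal{H}(f)(z)=\sum_{n\ge0}\big(\sum_{k\ge0}\frac{a_k}{n+k+1}\big)z^n$; equivalently $\mathcal{H}(f)(z)=\int_0^1 T_t(f)(z)\,dt$, where $T_t(f)(z)=\frac{1}{(t-1)z+1}f\!\left(\frac{t}{(t-1)z+1}\right)$ for $0<t<1$. *)

theory Defs
  imports "HOL-Analysis.Analysis"
begin

definition kor_norm :: "real \<Rightarrow> (complex \<Rightarrow> complex) \<Rightarrow> ereal" where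
  "kor_norm \<alpha> f = (SUP z\<in>ball 0 1. ereal ((1 - (cmod z)\<^sup>2) powr \<alpha> * cmod (f z)))"

definition korenblum :: "real \<Rightarrow> (complex \<Rightarrow> complex) set" where
  "korenblum \<alpha> = {f. f holomorphic_on ball 0 1 \<and> kor_norm \<alpha> f < \<infinity>}"

definition T_op :: "real \<Rightarrow> (complex \<Rightarrow> complex) \<Rightarrow> complex \<Rightarrow> complex" where
  "T_op t f z = (1 / ((of_real t - 1) * z + 1)) * f (of_real t / ((of_real t - 1) * z + 1))"

text \<open>Hilbert matrix operator, in its integral form.\<close>
definition hilbert_op :: "(complex \<Rightarrow> complex) \<Rightarrow> complex \<Rightarrow> complex" where
  "hilbert_op f z = integral {0..1} (\<lambda>t. T_op t f z)"

definition hilbert_norm :: "real \<Rightarrow> ereal" where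
  "hilbert_norm \<alpha> = (SUP f\<in>{f\<in>korenblum \<alpha>. kor_norm \<alpha> f \<le> 1}. kor_norm \<alpha> (hilbert_op f))"

definition G_fun :: "real \<Rightarrow> real \<Rightarrow> real \<Rightarrow> real" where
  "G_fun \<alpha> t x = (1 - x) powr (2*\<alpha> - 1) *
     ((1 - \<bar>x / (1 - t)\<bar>\<^sup>2) / ((1 - x)\<^sup>2 - t\<^sup>2)) powr \<alpha>"

definition x0_fun :: "real \<Rightarrow> real \<Rightarrow> real" where
  "x0_fun \<alpha> t = (\<alpha> + 2*\<alpha>*t - t - sqrt (4*\<alpha>\<^sup>2*t - 2*\<alpha>*t + \<alpha>\<^sup>2 - 2*\<alpha> + 1)) / (2*\<alpha> - 1)"

end

theory Submission
  imports Defs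
begin


definition Phi :: "real \<Rightarrow> real \<Rightarrow> real \<Rightarrow> real" where
  "Phi a t x = ((1-t+x)/((1-t)^2*(1+t-x))) powr a * (1-x) powr (2*a-1)"
definition psi :: "real \<Rightarrow> real \<Rightarrow> real \<Rightarrow> real" where
  "psi a t x = a*ln(1-t+x) - a*ln(1+t-x) + (2*a-1)*ln(1-x)"
definition Nq :: "real \<Rightarrow> real \<Rightarrow> real \<Rightarrow> real" where
  "Nq a t x = 1 - 2*a*x + (2*a-1)*(x-t)^2"

lemma Phi_eq:
  assumes "0 < t" "t < 1" "0 \<le> x" "x < 1"
  shows "Phi a t x = exp (psi a t x - 2*a*ln(1-t))"
proof -
  have p: "1-t+x > 0" "1+t-x > 0" "1-x > 0" "(1-t)^2 > 0" using assms by auto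
  have l: "ln ((1-t+x)/((1-t)^2*(1+t-x))) = ln(1-t+x) - 2*ln(1-t) - ln(1+t-x)"
    using p assms by (simp add: ln_div ln_mult ln_realpow)
  have A: "((1-t+x)/((1-t)^2*(1+t-x))) powr a = exp (a * (ln(1-t+x) - 2*ln(1-t) - ln(1+t-x)))"
    using p by (simp add: powr_def l[symmetric])
  have B: "(1-x) powr (2*a-1) = exp ((2*a-1) * ln(1-x))"
    using p by (simp add: powr_def)
  show ?thesis unfolding Phi_def psi_def A B exp_add[symmetric]
    by (simp add: algebra_simps)
qed

lemma psi_deriv:
  assumes "0 < t" "t < 1" "0 \<le> u" "u < 1"
  shows "(psi a t has_real_derivative Nq a t u / ((1-t+u)*(1+t-u)*(1-u))) (at u)"
proof -
  have p: "1-t+u > 0" "1+t-u > 0" "1-u > 0" using assms by auto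
  have "(psi a t has_real_derivative a*(1/(1-t+u)) - a*(-1/(1+t-u)) + (2*a-1)*(-1/(1-u))) (at u)"
    unfolding psi_def[abs_def] using p
    by (auto intro!: derivative_eq_intros)
  moreover have "a*(1/(1-t+u)) - a*(-1/(1+t-u)) + (2*a-1)*(-1/(1-u)) = Nq a t u / ((1-t+u)*(1+t-u)*(1-u))"
  proof -
    have e: "a*(1/p) - a*(-1/q) + (2*a-1)*(-1/r) = (a*q*r + a*p*r - (2*a-1)*p*q)/(p*q*r)"
      if "p \<noteq> 0" "q \<noteq> 0" "r \<noteq> 0" for p q r :: real
      using that by (simp add: field_simps)
    have n: "a*(1+t-u)*(1-u) + a*(1-t+u)*(1-u) - (2*a-1)*(1-t+u)*(1+t-u) = Nq a t u"
      unfolding Nq_def by (simp add: power2_eq_square algebra_simps)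
    show ?thesis using e[of "1-t+u" "1+t-u" "1-u"] p n by simp
  qed
  ultimately show ?thesis by simp
qed

lemma psi_cont: 
  assumes "0 < t" "t < 1" "0 \<le> x" "y < 1"
  shows "continuous_on {x..y} (psi a t)"
  unfolding psi_def[abs_def] using assms
  by (intro continuous_intros) auto

lemma psi_incr:
  assumes "0 < t" "t < 1" "0 \<le> x" "x \<le> y" "y < 1" "\<And>u. x \<le> u \<Longrightarrow> u \<le> y \<Longrightarrow> Nq a t u \<ge> 0"
  shows "psi a t x \<le> psi a t y"
proof (rule DERIV_nonneg_imp_increasing_open[OF assms(4) _ psi_cont])
  fix u assume u: "x < u" "u < y"
  have p: "1-t+u > 0" "1+t-u > 0" "1-u > 0" using assms u by auto
  show "\<exists>d. (psi a t has_real_derivative d) (at u) \<and> 0 \<le> d"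
    using psi_deriv[of t u a] assms u p by (intro exI[of _ "Nq a t u / ((1-t+u)*(1+t-u)*(1-u))"] conjI) (auto intro!: divide_nonneg_pos)
qed (use assms in auto)

lemma psi_decr:
  assumes "0 < t" "t < 1" "0 \<le> x" "x \<le> y" "y < 1" "\<And>u. x \<le> u \<Longrightarrow> u \<le> y \<Longrightarrow> Nq a t u \<le> 0"
  shows "psi a t x \<ge> psi a t y"
proof (rule DERIV_nonpos_imp_decreasing_open[OF assms(4) _ psi_cont])
  fix u assume u: "x < u" "u < y"
  have p: "1-t+u > 0" "1+t-u > 0" "1-u > 0" using assms u by auto
  show "\<exists>d. (psi a t has_real_derivative d) (at u) \<and> d \<le> 0"
    using psi_deriv[of t u a] assms u p by (intro exI[of _ "Nq a t u / ((1-t+u)*(1+t-u)*(1-u))"] conjI) (auto intro!: divide_nonpos_pos)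
qed (use assms in auto)

lemma N_caseA:
  assumes "0 < a" "a < 1" "0 < t" "t < 1" "a \<le> 2/3 \<or> (3*a-2)/(4*a-2) \<le> t" "0 \<le> u" "u \<le> 1-t"
  shows "Nq a t u \<ge> 0"
proof (cases "a \<ge> 1/2")
  case True
  have Ns: "Nq a t (1-t) = t*(4-6*a+(8*a-4)*t)" unfolding Nq_def by (simp add: power2_eq_square algebra_simps)
  have "4-6*a+(8*a-4)*t \<ge> 0"
  proof (cases "a \<le> 2/3")
    case True
    have "(8*a-4)*t \<ge> 0" using \<open>a \<ge> 1/2\<close> assms by simp
    then show ?thesis using True by linarith
  next
    case False
    then have "(3*a-2)/(4*a-2) \<le> t" "4*a-2 > 0" using assms by auto
    then have "3*a-2 \<le> t*(4*a-2)" by (simp add: divide_le_eq)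
    moreover have "(8*a-4)*t = 2*(t*(4*a-2))" by (simp add: algebra_simps)
    ultimately show ?thesis by linarith
  qed
  then have Ns0: "Nq a t (1-t) \<ge> 0" using Ns assms by simp
  have d: "Nq a t u - Nq a t (1-t) = (1-t-u)*(2*a - (2*a-1)*(u+(1-t)-2*t))"
    unfolding Nq_def by (simp add: power2_eq_square algebra_simps)
  have "2*a - (2*a-1)*(u+(1-t)-2*t) \<ge> 0"
  proof -
    have "u+(1-t)-2*t \<le> 2" using assms by linarith
    then have "(2*a-1)*(u+(1-t)-2*t) \<le> (2*a-1)*2" using True by (intro mult_left_mono) auto
    moreover have "(2*a-1)*2 = 4*a-2" by simp
    ultimately have "(2*a-1)*(u+(1-t)-2*t) \<le> 4*a-2" by simp
    then show ?thesis using assms by linarith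
  qed
  then have "Nq a t u - Nq a t (1-t) \<ge> 0" using d assms by simp
  then show ?thesis using Ns0 by linarith
next
  case False
  show ?thesis
  proof (cases "u \<ge> t")
    case True
    have "(u-t)^2 = (u-t)*(u-t)" by (simp add: power2_eq_square)
    also have "\<dots> \<le> (u-t)*1" using True assms by (intro mult_left_mono) auto
    finally have "(1-2*a)*(u-t)^2 \<le> (1-2*a)*(u-t)" using False by (intro mult_left_mono) auto
    also have "\<dots> \<le> (1-2*a)*u" using False assms by (intro mult_left_mono) auto
    finally have h: "(1-2*a)*(u-t)^2 \<le> (1-2*a)*u" .
    have e: "Nq a t u = 1 - 2*a*u - (1-2*a)*(u-t)^2" "(1-2*a)*u = u - 2*a*u" unfolding Nq_def by (simp_all add: algebra_simps)
    show ?thesis using h e assms by linarith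
  next
    case f2: False
    have "(t-u)^2 \<le> t^2" using f2 assms by (intro power_mono) auto
    then have "(u-t)^2 \<le> t^2" by (simp add: power2_commute)
    then have "(1-2*a)*(u-t)^2 \<le> (1-2*a)*t^2" using False by (intro mult_left_mono) auto
    moreover have "t^2 \<le> t*1" using assms unfolding power2_eq_square by (intro mult_left_mono) auto
    then have "(1-2*a)*t^2 \<le> (1-2*a)*t" using False by (intro mult_left_mono) auto
    moreover have "a*u \<le> a*t" using f2 assms by (intro mult_left_mono) auto
    moreover have e: "Nq a t u = 1 - 2*a*u - (1-2*a)*(u-t)^2" "(1-2*a)*t = t - 2*a*t" unfolding Nq_def by (simp_all add: algebra_simps)
    ultimately show ?thesis using assms by linarith
  qed
qed

lemma N_caseB:
  assumes "2/3 < a" "a < 1" "0 < t" "t < (3*a-2)/(4*a-2)"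
  shows "0 < x0_fun a t" "x0_fun a t < 1-t"
    "\<And>u. 0 \<le> u \<Longrightarrow> u \<le> x0_fun a t \<Longrightarrow> Nq a t u \<ge> 0"
    "\<And>u. x0_fun a t \<le> u \<Longrightarrow> u \<le> 1-t \<Longrightarrow> Nq a t u \<le> 0"
proof -
  define A where "A = a + (2*a-1)*t"
  define d where "d = 4*a^2*t - 2*a*t + a^2 - 2*a + 1"
  define q where "q = sqrt d"
  have pos: "2*a-1 > 0" using assms by auto
  have "d = (a-1)^2 + 2*t*a*(2*a-1)" unfolding d_def by (simp add: power2_eq_square algebra_simps)
  moreover have "2*t*a*(2*a-1) \<ge> 0" using assms pos by simp
  ultimately have dpos: "d \<ge> 0" by simp
  have qq: "q^2 = d" "q \<ge> 0" unfolding q_def using dpos by auto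
  have x0: "x0_fun a t = (A - q)/(2*a-1)" unfolding x0_fun_def A_def q_def d_def by (simp add: algebra_simps)
  have fac: "Nq a t u = ((2*a-1)*u - A - q) * (u - x0_fun a t)" for u
  proof -
    have "(2*a-1)*(u - x0_fun a t) = (2*a-1)*u - A + q" unfolding x0 using pos by (simp add: field_simps)
    then have "((2*a-1)*u - A - q) * (u - x0_fun a t) * (2*a-1) = ((2*a-1)*u - A - q) * ((2*a-1)*u - A + q)"
      by (simp add: mult.assoc mult.commute mult.left_commute)
    also have "\<dots> = ((2*a-1)*u - A)^2 - q^2" by (simp add: power2_eq_square algebra_simps)
    also have "\<dots> = Nq a t u * (2*a-1)" unfolding qq d_def A_def Nq_def by (simp add: power2_eq_square algebra_simps)
    finally show ?thesis using pos by simp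
  qed
  have neg: "(2*a-1)*u - A - q < 0" if "u \<le> 1" for u
  proof -
    have "(2*a-1)*u \<le> 2*a-1" using pos that by simp
    moreover have "(2*a-1)*t > 0" using pos assms by simp
    ultimately show ?thesis unfolding A_def using qq assms pos by linarith
  qed
  have N0: "Nq a t 0 > 0" unfolding Nq_def using pos assms by (simp add: add_pos_nonneg)
  have Ns: "Nq a t (1-t) < 0"
  proof -
    have "Nq a t (1-t) = t*(4-6*a+(8*a-4)*t)" unfolding Nq_def by (simp add: power2_eq_square algebra_simps)
    moreover have "t*(4*a-2) < 3*a-2" using assms pos by (simp add: less_divide_eq)
    moreover have "(8*a-4)*t = 2*(t*(4*a-2))" by (simp add: algebra_simps)
    ultimately have "4-6*a+(8*a-4)*t < 0" "Nq a t (1-t) = t*(4-6*a+(8*a-4)*t)" by linarith+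
    then show ?thesis using assms by (simp add: mult_pos_neg)
  qed
  show g1: "0 < x0_fun a t"
  proof (rule ccontr)
    assume "\<not> 0 < x0_fun a t"
    then have "0 - x0_fun a t \<ge> 0" by simp
    with neg[of 0] have "Nq a t 0 \<le> 0" unfolding fac[of 0] by (intro mult_nonpos_nonneg) auto
    with N0 show False by simp
  qed
  show g2: "x0_fun a t < 1-t"
  proof (rule ccontr)
    assume "\<not> x0_fun a t < 1-t"
    then have "1-t - x0_fun a t \<le> 0" by simp
    with neg[of "1-t"] assms have "Nq a t (1-t) \<ge> 0" unfolding fac[of "1-t"] by (intro mult_nonpos_nonpos) auto
    with Ns show False by simp
  qed
  show "Nq a t u \<ge> 0" if "0 \<le> u" "u \<le> x0_fun a t" for u
    using neg[of u] that g2 assms unfolding fac[of u] by (intro mult_nonpos_nonpos) auto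
  show "Nq a t u \<le> 0" if "x0_fun a t \<le> u" "u \<le> 1-t" for u
    using neg[of u] that assms unfolding fac[of u] by (intro mult_nonpos_nonneg) auto
qed



definition bnd :: "real \<Rightarrow> real \<Rightarrow> real" where
  "bnd a t = (if a \<le> 2/3 \<or> (3*a-2)/(4*a-2) \<le> t then t powr (a-1) * (1-t) powr (-a)
              else G_fun a t (x0_fun a t))"

lemma Phi_end:
  assumes "0 < t" "t < 1"
  shows "Phi a t (1-t) = t powr (a-1) * (1-t) powr (-a)"
proof -
  have h: "(2*w)/(w^2*(2*t)) = inverse (w*t)" if "w > 0" for w :: real
    using that assms by (simp add: field_simps power2_eq_square)
  have e: "1-t+(1-t) = 2*(1-t)" "1+t-(1-t) = 2*t" by simp_all
  have r: "(1-t+(1-t))/((1-t)^2*(1+t-(1-t))) = inverse ((1-t)*t)"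
    unfolding e using assms by (intro h) simp
  have "Phi a t (1-t) = (inverse ((1-t)*t)) powr a * t powr (2*a-1)"
    unfolding Phi_def r by simp
  also have "(inverse ((1-t)*t)) powr a = ((1-t)*t) powr (-a)"
    by (simp only: inverse_powr powr_minus)
  also have "((1-t)*t) powr (-a) = (1-t) powr (-a) * t powr (-a)"
    by (rule powr_mult)
  also have "(1-t) powr (-a) * t powr (-a) * t powr (2*a-1) = (1-t) powr (-a) * (t powr (-a) * t powr (2*a-1))"
    by (rule mult.assoc)
  also have "t powr (-a) * t powr (2*a-1) = t powr (a-1)"
    using assms by (simp add: powr_add[symmetric])
  finally show ?thesis by simp
qed

lemma ratio_aux:
  fixes w x :: real
  assumes "w > 0" "0 \<le> x" "x < w" "w \<le> 1"
  shows "(1 - (x/w)^2)/((1-x)^2 - (1-w)^2) = (w+x)/(w^2*(2-w-x))"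
proof -
  have e1: "(1-x)^2 - (1-w)^2 = (w-x)*(2-w-x)" by (simp add: power2_eq_square algebra_simps)
  have e2: "1 - (x/w)^2 = (w-x)*(w+x)/w^2" using assms by (simp add: field_simps power2_eq_square)
  have n: "w - x \<noteq> 0" "2-w-x \<noteq> 0" using assms by auto
  have c: "p*q/r/(p*d) = q/(r*d)" if "p \<noteq> 0" for p q r d :: real
    using that by simp
  show ?thesis unfolding e1 e2 using c n(1) by simp
qed

lemma G_eq_Phi:
  assumes "0 < t" "t < 1" "0 \<le> x" "x < 1-t"
  shows "G_fun a t x = Phi a t x"
proof -
  have r: "(1 - \<bar>x / (1 - t)\<bar>\<^sup>2) / ((1 - x)\<^sup>2 - t\<^sup>2) = (1-t+x)/((1-t)^2*(1+t-x))"
  proof -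
    have ab: "\<bar>x / (1 - t)\<bar> = x/(1-t)" using assms by simp
    have e: "1-(1-t) = t" "2-(1-t)-x = 1+t-x" by simp_all
    have i: "(1 - (x/(1-t))^2)/((1-x)^2 - (1-(1-t))^2) = ((1-t)+x)/((1-t)^2*(2-(1-t)-x))"
      by (rule ratio_aux) (use assms in auto)
    show ?thesis unfolding ab using i[unfolded e] by simp
  qed
  show ?thesis unfolding G_fun_def Phi_def r by simp
qed

lemma Phi_mono:
  assumes "0 < t" "t < 1" "0 \<le> x" "x \<le> y" "y < 1" "psi a t x \<le> psi a t y"
  shows "Phi a t x \<le> Phi a t y"
  using assms by (simp add: Phi_eq)

lemma Phi_bound:
  assumes "0 < a" "a < 1" "0 < t" "t < 1" "0 \<le> x" "x \<le> 1-t"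
  shows "Phi a t x \<le> bnd a t"
proof (cases "a \<le> 2/3 \<or> (3*a-2)/(4*a-2) \<le> t")
  case True
  have "psi a t x \<le> psi a t (1-t)"
    using assms by (intro psi_incr N_caseA[OF assms(1-4) True]) auto
  then have "Phi a t x \<le> Phi a t (1-t)" using assms by (intro Phi_mono) auto
  then show ?thesis using True Phi_end assms unfolding bnd_def by simp
next
  case False
  then have a: "2/3 < a" "t < (3*a-2)/(4*a-2)" by auto
  note B = N_caseB[OF a(1) assms(2,3) a(2)]
  have "Phi a t x \<le> Phi a t (x0_fun a t)"
  proof (cases "x \<le> x0_fun a t")
    case True
    have "psi a t x \<le> psi a t (x0_fun a t)"
      using assms True B by (intro psi_incr) auto
    then show ?thesis using assms True B by (intro Phi_mono) auto
  next
    case f: False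
    have "psi a t x \<le> psi a t (x0_fun a t)"
      using assms f B by (intro psi_decr) auto
    then show ?thesis using assms f B by (subst (1 2) Phi_eq) auto
  qed
  also have "\<dots> = G_fun a t (x0_fun a t)" using B assms by (intro G_eq_Phi[symmetric]) auto
  finally show ?thesis using False unfolding bnd_def by simp
qed




lemma Phi_alt:
  assumes "0 < t" "t < 1" "0 \<le> x" "x < 1-t"
  shows "(1 - (x/(1-t))^2) powr a * (1/(1-x)) * (1 - (t/(1-x))^2) powr (-a) = Phi a t x"
proof -
  define R where "R = (1-t+x)/((1-t)^2*(1+t-x))"
  define L where "L = 1 - (t/(1-x))^2"
  have px: "1 - x > 0" using assms by simp
  have tl: "t/(1-x) < 1" using assms px by (simp add: divide_less_eq)
  have tl0: "t/(1-x) > 0" using assms px by simp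
  have "(t/(1-x))^2 < 1^2" using tl tl0 by (intro power_strict_mono) auto
  then have "(t/(1-x))^2 < 1" by simp
  then have Lp: "L > 0" unfolding L_def by simp
  have Rp: "R > 0" unfolding R_def using assms by (intro divide_pos_pos mult_pos_pos) auto
  have R: "(1 - (x/(1-t))^2)/((1-x)^2 - t^2) = R"
  proof -
    have e: "1-(1-t) = t" "2-(1-t)-x = 1+t-x" by simp_all
    have i: "(1 - (x/(1-t))^2)/((1-x)^2 - (1-(1-t))^2) = ((1-t)+x)/((1-t)^2*(2-(1-t)-x))"
      by (rule ratio_aux) (use assms in auto)
    show ?thesis unfolding R_def using i[unfolded e] by simp
  qed
  have "t/(1-x) * (1-x) = t" using px by simp
  then have "(t/(1-x) * (1-x))^2 = t^2" by simp
  then have "(t/(1-x))^2 * (1-x)^2 = t^2" by (simp only: power_mult_distrib)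
  then have Le: "(1-x)^2 - t^2 = L * (1-x)^2" unfolding L_def by (simp add: algebra_simps)
  have K: "1 - (x/(1-t))^2 = R * L * (1-x)^2"
  proof -
    have "(1-x)^2 - t^2 \<noteq> 0" using Le Lp px by simp
    then have "1 - (x/(1-t))^2 = R * ((1-x)^2 - t^2)" using R by (simp add: divide_eq_eq)
    then show ?thesis unfolding Le by (simp add: mult.assoc)
  qed
  have sq: "((1-x)^2) powr a = (1-x) powr (2*a)"
  proof -
    have "(1-x) powr (real 2) = (1-x)^2" using px by (rule powr_realpow)
    then have "(1-x)^2 = (1-x) powr 2" by simp
    then show ?thesis by (simp only: powr_powr)
  qed
  have "(1 - (x/(1-t))^2) powr a * (1/(1-x)) * L powr (-a)
      = R powr a * (L powr a * L powr (-a)) * ((1-x) powr (2*a) * (1-x) powr (-1))"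
  proof -
    have e1: "(R*L*(1-x)^2) powr a = R powr a * L powr a * (1-x) powr (2*a)"
      by (simp only: powr_mult sq)
    have e2: "1/(1-x) = (1-x) powr (-1)" using px by (simp add: powr_minus_divide)
    show ?thesis unfolding K e1 e2 by (simp only: mult_ac)
  qed
  also have "L powr a * L powr (-a) = 1" using Lp by (simp add: powr_add[symmetric])
  also have "(1-x) powr (2*a) * (1-x) powr (-1) = (1-x) powr (2*a-1)"
    using powr_add[of "1-x" "2*a" "-1"] by simp
  finally have "(1 - (x/(1-t))^2) powr a * (1/(1-x)) * L powr (-a) = R powr a * 1 * (1-x) powr (2*a-1)" .
  then show ?thesis unfolding Phi_def R_def L_def by (simp only: mult_1_right)
qed





lemma kor_pointwise:
  assumes "kor_norm a f \<le> 1" "cmod w < 1"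
  shows "(1 - (cmod w)^2) powr a * cmod (f w) \<le> 1"
proof -
  have "w \<in> ball 0 1" using assms(2) by simp
  then have "ereal ((1 - (cmod w)^2) powr a * cmod (f w)) \<le> kor_norm a f"
    unfolding kor_norm_def by (rule SUP_upper)
  then have "ereal ((1 - (cmod w)^2) powr a * cmod (f w)) \<le> 1" using assms(1) by (rule order_trans)
  then show ?thesis by simp
qed

lemma T_bound:
  assumes "0 < a" "a < 1" "0 < t" "t < 1" "cmod z < 1"
    and hf: "\<And>w. cmod w < 1 \<Longrightarrow> (1 - (cmod w)^2) powr a * cmod (f w) \<le> 1"
  shows "(1 - (cmod z)^2) powr a * cmod (T_op t f z) \<le> Phi a t ((1-t) * cmod z)"
proof -
  define r where "r = cmod z"
  define x where "x = (1-t)*r"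
  define D where "D = (of_real t - 1) * z + 1"
  define w where "w = of_real t / D"
  have r0: "0 \<le> r" "r < 1" using assms unfolding r_def by auto
  have "(1-t)*r < (1-t)*1" using r0 assms by (intro mult_strict_left_mono) auto
  then have x0: "0 \<le> x" "x < 1-t" unfolding x_def using r0 assms by auto
  have De: "D = 1 - of_real (1-t) * z" unfolding D_def by (simp add: algebra_simps)
  have n: "cmod (complex_of_real (1-t) * z) = x" unfolding x_def r_def using assms
    by (simp add: norm_mult del: of_real_diff)
  have "cmod (1::complex) - cmod (complex_of_real (1-t) * z) \<le> cmod (1 - complex_of_real (1-t) * z)"
    by (rule norm_triangle_ineq2)
  then have r1: "cmod D \<ge> 1 - x" unfolding De n by simp
  have r2: "cmod D > t" using r1 x0 by linarith
  have Dp: "cmod D > 0" using r2 assms by linarith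
  have cw: "cmod w = t / cmod D" unfolding w_def using assms by (simp add: norm_divide)
  have cw1: "cmod w < 1" unfolding cw using r2 Dp by (simp add: divide_less_eq)
  have "(cmod w)^2 < 1^2" using cw1 by (intro power_strict_mono) auto
  then have Lp: "1 - (cmod w)^2 > 0" by simp
  have Lpa: "(1 - (cmod w)^2) powr a > 0" using Lp by simp
  have "cmod (f w) \<le> 1 / (1 - (cmod w)^2) powr a"
    using hf[OF cw1] Lpa by (simp add: pos_le_divide_eq mult.commute)
  then have fw: "cmod (f w) \<le> (1 - (cmod w)^2) powr (-a)"
    by (simp add: powr_minus_divide)
  note rho = r1 r2
  have T: "cmod (T_op t f z) = (1/cmod D) * cmod (f w)"
    unfolding T_op_def D_def[symmetric] w_def[symmetric] by (simp add: norm_mult norm_divide)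
  have px: "1 - x > 0" using x0 assms by simp
  have m1: "1/cmod D \<le> 1/(1-x)" using rho px Dp by (intro divide_left_mono mult_pos_pos) auto
  have tD: "t / cmod D \<le> t/(1-x)" using rho px assms Dp by (intro divide_left_mono mult_pos_pos) auto
  have tl: "t/(1-x) < 1" using x0 px by (simp add: divide_less_eq)
  have "(t / cmod D)^2 \<le> (t/(1-x))^2" using tD assms rho by (intro power_mono) auto
  then have Lm: "1 - (t/(1-x))^2 \<le> 1 - (cmod w)^2" unfolding cw by simp
  have Lp2: "1 - (t/(1-x))^2 > 0"
  proof -
    have "(t/(1-x))^2 < 1^2" using tl assms px by (intro power_strict_mono) auto
    then show ?thesis by simp
  qed
  have m2: "(1 - (cmod w)^2) powr (-a) \<le> (1 - (t/(1-x))^2) powr (-a)"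
    using Lm Lp2 assms by (intro powr_mono2') auto
  have "cmod (T_op t f z) \<le> (1/(1-x)) * (1 - (t/(1-x))^2) powr (-a)"
  proof -
    have fw2: "cmod (f w) \<le> (1 - (t/(1-x))^2) powr (-a)" using fw m2 by linarith
    show ?thesis unfolding T using m1 fw2 px by (intro mult_mono) auto
  qed
  then have A: "(1 - r^2) powr a * cmod (T_op t f z) \<le> (1 - r^2) powr a * ((1/(1-x)) * (1 - (t/(1-x))^2) powr (-a))"
    by (intro mult_left_mono) auto
  have r_eq: "x/(1-t) = r" unfolding x_def using assms by simp
  have B: "(1 - r^2) powr a * ((1/(1-x)) * (1 - (t/(1-x))^2) powr (-a)) = Phi a t x"
    using Phi_alt[OF assms(3,4) x0, unfolded r_eq] by (simp only: mult.assoc)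
  have "(1 - r^2) powr a * cmod (T_op t f z) \<le> Phi a t x" using A B by linarith
  then show ?thesis unfolding r_def x_def .
qed




lemma D_props:
  assumes "0 < t" "t < 1" "cmod z < 1"
  shows "cmod ((of_real t - 1) * z + 1) > t"
    "cmod (of_real t / ((of_real t - 1) * z + 1)) < 1"
proof -
  define D where "D = (of_real t - 1) * z + 1"
  have De: "D = 1 - of_real (1-t) * z" unfolding D_def by (simp add: algebra_simps)
  have n: "cmod (complex_of_real (1-t) * z) = (1-t) * cmod z" using assms
    by (simp add: norm_mult del: of_real_diff)
  have "(1-t) * cmod z < (1-t) * 1" using assms by (intro mult_strict_left_mono) auto
  moreover have "cmod (1::complex) - cmod (complex_of_real (1-t) * z) \<le> cmod (1 - complex_of_real (1-t) * z)"
    by (rule norm_triangle_ineq2)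
  ultimately have r2: "cmod D > t" unfolding De n by simp
  then show "cmod ((of_real t - 1) * z + 1) > t" unfolding D_def .
  have "cmod (of_real t / D) = t / cmod D" using assms by (simp add: norm_divide)
  also have "\<dots> < 1" using r2 assms by (simp add: divide_less_eq)
  finally show "cmod (of_real t / ((of_real t - 1) * z + 1)) < 1" unfolding D_def .
qed

lemma F_cont:
  assumes hol: "f holomorphic_on ball 0 1" and z: "cmod z < 1"
  shows "continuous_on {0<..<1} (\<lambda>t. T_op t f z)"
proof -
  have nz: "(of_real t - 1) * z + 1 \<noteq> 0" if "t \<in> {0<..<1}" for t
    using D_props(1)[of t z] that z by auto
  have cw: "continuous_on {0<..<1} (\<lambda>t::real. of_real t / ((of_real t - 1) * z + 1))"
    using nz by (intro continuous_intros) auto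
  have im: "(\<lambda>t::real. of_real t / ((of_real t - 1) * z + 1)) ` {0<..<1} \<subseteq> ball 0 1"
    using D_props(2)[of _ z] z by auto
  have cf: "continuous_on {0<..<1} (\<lambda>t::real. f (of_real t / ((of_real t - 1) * z + 1)))"
    by (rule continuous_on_compose2[OF holomorphic_on_imp_continuous_on[OF hol] cw im])
  have c1: "continuous_on {0<..<1} (\<lambda>t::real. 1 / ((of_real t - 1) * z + 1))"
    using nz by (intro continuous_intros) auto
  show ?thesis unfolding T_op_def using c1 cf by (intro continuous_on_mult)
qed

lemma bnd_nonneg: "bnd a t \<ge> 0"
  unfolding bnd_def G_fun_def by auto

lemma upper_general:
  assumes "0 < a" "a < 1" and int: "bnd a integrable_on {0..1}"
  shows "hilbert_norm a \<le> ereal (integral {0..1} (bnd a))"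
  unfolding hilbert_norm_def
proof (rule SUP_least)
  fix f assume "f \<in> {f \<in> korenblum a. kor_norm a f \<le> 1}"
  then have hol: "f holomorphic_on ball 0 1" and kn: "kor_norm a f \<le> 1"
    by (auto simp: korenblum_def)
  have hf: "\<And>w. cmod w < 1 \<Longrightarrow> (1-(cmod w)^2) powr a * cmod (f w) \<le> 1"
    using kor_pointwise[OF kn] by blast
  define I where "I = integral {0..1} (bnd a)"
  show "kor_norm a (hilbert_op f) \<le> ereal I"
    unfolding kor_norm_def
  proof (rule SUP_least)
    fix z :: complex assume "z \<in> ball 0 1"
    then have z: "cmod z < 1" by simp
    define c where "c = (1 - (cmod z)^2) powr a"
    have "(cmod z)^2 < 1^2" using z by (intro power_strict_mono) auto
    then have cpos: "c > 0" unfolding c_def by simp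
    have "(bnd a has_integral I) {0..1}" unfolding I_def using int by (rule integrable_integral)
    then have "((\<lambda>t. bnd a t / c) has_integral I / c) {0..1}" by (rule has_integral_divide)
    then have bI: "((\<lambda>t. bnd a t / c) has_integral I / c) {0<..<1}" by (simp add: has_integral_Icc_iff_Ioo)
    have bound: "norm (T_op t f z) \<le> bnd a t / c" if t: "t \<in> {0<..<1}" for t
    proof -
      have t01: "0 < t" "t < 1" using t by auto
      have "(1-t) * cmod z \<le> (1-t) * 1" using z t01 by (intro mult_left_mono) auto
      then have "Phi a t ((1-t) * cmod z) \<le> bnd a t"
        using assms t01 by (intro Phi_bound) auto
      moreover have "c * cmod (T_op t f z) \<le> Phi a t ((1-t) * cmod z)"
        unfolding c_def using T_bound[OF assms(1,2) t01 z hf] by blast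
      ultimately have "c * cmod (T_op t f z) \<le> bnd a t" by linarith
      then show ?thesis using cpos by (simp add: pos_le_divide_eq mult.commute)
    qed
    have meas: "(\<lambda>t. T_op t f z) \<in> borel_measurable (lebesgue_on {0<..<1})"
      by (rule continuous_imp_measurable_on_sets_lebesgue[OF F_cont[OF hol z]]) simp
    have "norm (integral {0<..<1} (\<lambda>t. T_op t f z)) \<le> I / c"
      by (rule integral_norm_bound_integral'[OF bound meas _ bI]) simp_all
    moreover have "hilbert_op f z = integral {0<..<1} (\<lambda>t. T_op t f z)"
      unfolding hilbert_op_def by (rule integral_open_interval_real)
    ultimately have "cmod (hilbert_op f z) \<le> I / c" by simp
    then have "c * cmod (hilbert_op f z) \<le> I" using cpos by (simp add: pos_le_divide_eq mult.commute)
    then show "ereal ((1 - (cmod z)^2) powr a * cmod (hilbert_op f z)) \<le> ereal I"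
      unfolding c_def by simp
  qed
qed




lemma beta_int:
  assumes "0 < a" "a < 1"
  shows "((\<lambda>t. t powr (a-1) * (1-t) powr (-a)) has_integral pi / sin (a*pi)) {0..1}"
proof -
  have "((\<lambda>t. t powr (a-1) * (1-t) powr ((1-a)-1)) has_integral Beta a (1-a)) {0..1}"
    using assms by (intro has_integral_Beta_real) auto
  moreover have "Beta a (1-a) = pi / sin (a*pi)"
  proof -
    have "Beta a (1-a) = Gamma a * Gamma (1-a)" by (simp add: Beta_def)
    moreover have "complex_of_real (Gamma a * Gamma (1-a)) = of_real (pi / sin (a*pi))"
      using Gamma_reflection_complex[of "of_real a"]
      by (simp add: Gamma_complex_of_real[symmetric] sin_of_real[symmetric] mult.commute)
    ultimately show ?thesis by (metis of_real_eq_iff)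
  qed
  ultimately show ?thesis by simp
qed

lemma Phi_le:
  assumes "1/2 \<le> a" "0 < t" "t < 1" "0 \<le> x" "x < 1-t"
  shows "Phi a t x \<le> t powr (-a) * (1-t) powr (-a)"
proof -
  have px: "0 < 1 - x" "1 - x \<le> 1" using assms by auto
  have r1: "(1-t+x)/((1-t)^2*(1+t-x)) \<le> inverse ((1-t)*t)"
  proof -
    have d: "(1-t)^2*(1+t-x) > 0" using assms by (intro mult_pos_pos) auto
    have "(1-t+x) * ((1-t)*t) \<le> (1-t)^2*(1+t-x)"
    proof -
      have "(1-t)^2*(1+t-x) - (1-t+x) * ((1-t)*t) = (1-t)*((1-t)*(1+t-x) - (1-t+x)*t)"
        by (simp add: power2_eq_square algebra_simps)
      also have "(1-t)*(1+t-x) - (1-t+x)*t = 1 - t - x" by (simp add: algebra_simps power2_eq_square)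
      finally have "(1-t)^2*(1+t-x) - (1-t+x) * ((1-t)*t) = (1-t)*(1-t-x)" .
      moreover have "(1-t)*(1-t-x) \<ge> 0" using assms by simp
      ultimately show ?thesis by linarith
    qed
    then show ?thesis using d assms by (simp add: divide_le_eq field_simps)
  qed
  have r0: "(1-t+x)/((1-t)^2*(1+t-x)) \<ge> 0" using assms by simp
  have "((1-t+x)/((1-t)^2*(1+t-x))) powr a \<le> (inverse ((1-t)*t)) powr a"
    using r1 r0 assms by (intro powr_mono2) auto
  also have "(inverse ((1-t)*t)) powr a = ((1-t)*t) powr (-a)"
    by (simp only: inverse_powr powr_minus)
  also have "\<dots> = (1-t) powr (-a) * t powr (-a)" by (rule powr_mult)
  also have "\<dots> = t powr (-a) * (1-t) powr (-a)" by (rule mult.commute)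
  finally have A: "((1-t+x)/((1-t)^2*(1+t-x))) powr a \<le> t powr (-a) * (1-t) powr (-a)" .
  have B: "(1-x) powr (2*a-1) \<le> 1"
  proof -
    have "(1-x) powr (2*a-1) \<le> 1 powr (2*a-1)" using px assms by (intro powr_mono2) auto
    then show ?thesis by simp
  qed
  have "Phi a t x \<le> (t powr (-a) * (1-t) powr (-a)) * 1"
    unfolding Phi_def using A B by (intro mult_mono) auto
  then show ?thesis by simp
qed

lemma H_int:
  assumes "2/3 < a" "a < 1"
  shows "(\<lambda>t. G_fun a t (x0_fun a t)) integrable_on {0..(3*a-2)/(4*a-2)}"
proof -
  define c where "c = (3*a-2)/(4*a-2)"
  have c: "0 < c" "c < 1" unfolding c_def using assms by (auto simp: divide_less_eq)
  have B: "0 < x0_fun a t \<and> x0_fun a t < 1-t" if "t \<in> {0<..<c}" for t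
    using N_caseB(1,2)[of a t] assms that c unfolding c_def by auto
  have HP: "G_fun a t (x0_fun a t) = Phi a t (x0_fun a t)" if "t \<in> {0<..<c}" for t
    using B[OF that] that c by (intro G_eq_Phi) auto
  have "(\<lambda>t. t powr ((1-a)-1) * (1-t) powr ((1-a)-1)) integrable_on {0..1}"
    using assms by (intro integrable_Beta') auto
  then have "(\<lambda>t. t powr (-a) * (1-t) powr (-a)) integrable_on {0..1}" by simp
  then have "(\<lambda>t. t powr (-a) * (1-t) powr (-a)) integrable_on {0..c}"
    by (rule integrable_on_subinterval) (use c in auto)
  then have bint: "(\<lambda>t. t powr (-a) * (1-t) powr (-a)) integrable_on {0<..<c}"
    by (simp add: integrable_on_Icc_iff_Ioo)
  have disc: "4*a^2*t - 2*a*t + a^2 - 2*a + 1 \<ge> 0" if "t \<ge> 0" for t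
  proof -
    have "4*a^2*t - 2*a*t + a^2 - 2*a + 1 = (a-1)^2 + 2*t*a*(2*a-1)" by (simp add: power2_eq_square algebra_simps)
    moreover have "2*t*a*(2*a-1) \<ge> 0" using assms that by simp
    ultimately show ?thesis by simp
  qed
  have cx0: "continuous_on {0<..<c} (x0_fun a)"
  proof -
    have "2*a - 1 \<noteq> 0" using assms by simp
    then show ?thesis unfolding x0_fun_def[abs_def] by (intro continuous_intros) auto
  qed
  have cP: "continuous_on {0<..<c} (\<lambda>t. Phi a t (x0_fun a t))"
  proof -
    have cx0': "continuous_on {0<..<c} (\<lambda>t. x0_fun a t)" using cx0 by simp
    have pos: "(1-t+x0_fun a t)/((1-t)^2*(1+t-x0_fun a t)) \<noteq> 0" "1 - x0_fun a t \<noteq> 0"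
      "(1-t)^2*(1+t-x0_fun a t) \<noteq> 0" if "t \<in> {0<..<c}" for t
      using B[OF that] that c by auto
    show ?thesis unfolding Phi_def using pos
      by (intro continuous_intros cx0') auto
  qed
  have cH: "continuous_on {0<..<c} (\<lambda>t. G_fun a t (x0_fun a t))"
  proof -
    have "continuous_on {0<..<c} (\<lambda>t. G_fun a t (x0_fun a t)) = continuous_on {0<..<c} (\<lambda>t. Phi a t (x0_fun a t))"
      by (rule continuous_on_cong[OF refl]) (rule HP)
    then show ?thesis using cP by simp
  qed
  have meas: "(\<lambda>t. G_fun a t (x0_fun a t)) \<in> borel_measurable (lebesgue_on {0<..<c})"
    by (rule continuous_imp_measurable_on_sets_lebesgue[OF cH]) simp
  have bd: "norm (G_fun a t (x0_fun a t)) \<le> t powr (-a) * (1-t) powr (-a)" if "t \<in> {0<..<c}" for t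
  proof -
    have "G_fun a t (x0_fun a t) \<ge> 0" unfolding G_fun_def by (intro mult_nonneg_nonneg powr_ge_zero)
    moreover have "Phi a t (x0_fun a t) \<le> t powr (-a) * (1-t) powr (-a)"
      using B[OF that] that c assms by (intro Phi_le) auto
    ultimately show ?thesis using HP[OF that] by simp
  qed
  have "(\<lambda>t. G_fun a t (x0_fun a t)) integrable_on {0<..<c}"
  proof (rule measurable_bounded_by_integrable_imp_integrable[OF meas bint])
    show "norm (G_fun a t (x0_fun a t)) \<le> t powr (-a) * (1-t) powr (-a)" if "t \<in> {0<..<c}" for t
      using bd[OF that] .
    show "{0<..<c} \<in> sets lebesgue" by simp
  qed
  then show ?thesis unfolding c_def[symmetric] by (simp add: integrable_on_Icc_iff_Ioo)
qed




definition f0 :: "real \<Rightarrow> complex \<Rightarrow> complex" where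
  "f0 a z = complex_of_real (2 powr (-a)) * (1 - z) powr (- complex_of_real a)"

definition hx :: "real \<Rightarrow> real \<Rightarrow> real \<Rightarrow> real" where
  "hx a x t = ((1+x)/2) powr a * (1-t) powr (-a) * (1-(1-t)*x) powr (a-1)"

lemma f0_hol: "f0 a holomorphic_on ball 0 1"
proof -
  have "1 - z \<notin> \<real>\<^sub>\<le>\<^sub>0" if "z \<in> ball 0 1" for z :: complex
  proof -
    have "\<bar>Re z\<bar> \<le> cmod z" by (rule abs_Re_le_cmod)
    then have "Re z < 1" using that by simp
    then show ?thesis by (simp add: complex_nonpos_Reals_iff)
  qed
  then show ?thesis unfolding f0_def[abs_def] by (intro holomorphic_intros) auto
qed

lemma f0_pt:
  assumes "0 < a" "cmod z < 1"
  shows "(1 - (cmod z)^2) powr a * cmod (f0 a z) \<le> 1"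
proof -
  define u where "u = 1 - (cmod z)^2"
  define v where "v = 2 * cmod (1 - z)"
  have "(cmod z)^2 < 1^2" using assms by (intro power_strict_mono) auto
  then have u0: "u > 0" unfolding u_def by simp
  have n1: "cmod (1 - z) \<ge> 1 - cmod z" using norm_triangle_ineq2[of 1 z] by simp
  then have v0: "v > 0" unfolding v_def using assms by linarith
  have uv: "u \<le> v"
  proof -
    have "u = (1 - cmod z) * (1 + cmod z)" unfolding u_def by (simp add: power2_eq_square algebra_simps)
    also have "\<dots> \<le> (1 - cmod z) * 2" using assms by (intro mult_left_mono) auto
    also have "\<dots> \<le> cmod (1 - z) * 2" using n1 by simp
    finally show ?thesis unfolding v_def by simp
  qed
  have nf: "cmod (f0 a z) = 2 powr (-a) * cmod (1 - z) powr (-a)"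
    unfolding f0_def by (simp add: norm_mult norm_powr_real_powr')
  have "u powr a * cmod (f0 a z) = u powr a * v powr (-a)"
    unfolding nf v_def by (simp add: powr_mult)
  also have "\<dots> = (u / v) powr a"
  proof -
    have "(u/v) powr a = u powr a / v powr a" by (rule powr_divide)
    moreover have "v powr (-a) = 1 / v powr a" by (rule powr_minus_divide)
    ultimately show ?thesis by simp
  qed
  also have "\<dots> \<le> 1 powr a" using u0 v0 uv assms by (intro powr_mono2) auto
  finally show ?thesis unfolding u_def by simp
qed

lemma f0_kor:
  assumes "0 < a"
  shows "f0 a \<in> {f \<in> korenblum a. kor_norm a f \<le> 1}"
proof -
  have k: "kor_norm a (f0 a) \<le> 1"
    unfolding kor_norm_def
  proof (rule SUP_least)
    fix z :: complex assume "z \<in> ball 0 1"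
    then have "cmod z < 1" by simp
    then have "(1 - (cmod z)^2) powr a * cmod (f0 a z) \<le> 1" by (rule f0_pt[OF assms])
    then show "ereal ((1 - (cmod z)^2) powr a * cmod (f0 a z)) \<le> 1" by simp
  qed
  have "(1::ereal) < \<infinity>" by simp
  then have "kor_norm a (f0 a) < \<infinity>" using k by (rule order_le_less_trans[rotated])
  then show ?thesis using k f0_hol by (simp add: korenblum_def)
qed



lemma T_f0:
  assumes "0 \<le> x" "x < 1" "0 < t" "t < 1"
  shows "T_op t (f0 a) (of_real x) =
    of_real ((1/(1-(1-t)*x)) * (2 powr (-a) * (1 - t/(1-(1-t)*x)) powr (-a)))"
proof -
  define d where "d = 1-(1-t)*x"
  have "(1-t)*x < 1*1" using assms by (intro mult_strict_mono') auto
  then have dpos: "d > 0" unfolding d_def by simp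
  have "d - t = (1-t)*(1-x)" unfolding d_def by (simp add: algebra_simps)
  then have dt: "d - t \<ge> 0" using assms by simp
  have q: "1 - t/d \<ge> 0" using dt dpos by (simp add: field_simps)
  have e1: "(of_real t - 1) * of_real x + 1 = (of_real d :: complex)"
    unfolding d_def by (simp add: algebra_simps)
  have e2: "1 - of_real t / of_real d = (of_real (1 - t/d) :: complex)" by simp
  have e3: "(of_real (1-t/d) :: complex) powr (- of_real a) = of_real ((1-t/d) powr (-a))"
    using powr_of_real[OF q, of "-a"] by simp
  show ?thesis unfolding T_op_def e1 f0_def e2 e3 d_def[symmetric] by simp
qed

lemma hx_eq:
  assumes "0 \<le> x" "x < 1" "0 < t" "t < 1"
  shows "(1-x^2) powr a * ((1/(1-(1-t)*x)) * (2 powr (-a) * (1 - t/(1-(1-t)*x)) powr (-a))) = hx a x t"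
proof -
  define d where "d = 1-(1-t)*x"
  define A where "A = 1 - x"
  define B where "B = 1 + x"
  define T where "T = 1 - t"
  have "(1-t)*x < 1*1" using assms by (intro mult_strict_mono') auto
  then have dpos: "d > 0" unfolding d_def by simp
  have pos: "A > 0" "B > 0" "T > 0" unfolding A_def B_def T_def using assms by auto
  have e1: "1 - x^2 = A * B" unfolding A_def B_def by (simp add: power2_eq_square algebra_simps)
  have e2: "1 - t/d = T * A / d"
  proof -
    have "d - t = T * A" unfolding d_def T_def A_def by (simp add: algebra_simps)
    then show ?thesis using dpos by (simp add: field_simps)
  qed
  have e3: "(1+x)/2 = B/2" unfolding B_def by simp
  have p1: "(A*B) powr a = A powr a * B powr a" by (rule powr_mult)
  have p2: "(T*A/d) powr (-a) = T powr (-a) * (1 / A powr a) * (1 / (d powr (-a)))"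
    by (simp add: powr_divide powr_mult powr_minus_divide)
  have p3: "d powr (-a) = 1 / d powr a" by (rule powr_minus_divide)
  have p4: "2 powr (-a) = 1 / 2 powr a" by (rule powr_minus_divide)
  have p5: "(B/2) powr a = B powr a / 2 powr a" by (rule powr_divide)
  have p6: "d powr (a-1) = d powr a / d"
    using dpos by (simp add: powr_diff)
  have nz: "A powr a \<noteq> 0" "d powr a \<noteq> 0" "(2::real) powr a \<noteq> 0" "d \<noteq> 0"
    using pos dpos by auto
  have "(1-x^2) powr a * ((1/d) * (2 powr (-a) * (1 - t/d) powr (-a)))
      = A powr a * B powr a * ((1/d) * ((1 / 2 powr a) * (T powr (-a) * (1 / A powr a) * (1 / (1 / d powr a)))))"
    unfolding e1 e2 p1 p2 p3 p4 by simp
  also have "\<dots> = B powr a / 2 powr a * T powr (-a) * (d powr a / d)"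
    using nz by (simp add: field_simps)
  also have "\<dots> = hx a x t"
  proof -
    have "hx a x t = (B/2) powr a * T powr (-a) * d powr (a-1)"
      unfolding hx_def d_def T_def B_def by simp
    then show ?thesis unfolding p5 p6 using nz by simp
  qed
  finally show ?thesis unfolding d_def .
qed




lemma hx_nonneg: "hx a x t \<ge> 0"
  unfolding hx_def by (intro mult_nonneg_nonneg powr_ge_zero)

lemma hx_cont:
  assumes "0 \<le> x" "x < 1"
  shows "continuous_on {0<..<1} (hx a x)"
proof -
  have nz: "1 - (1-t)*x \<noteq> 0" if "t \<in> {0<..<1}" for t :: real
  proof -
    have "(1-t)*x < 1*1" using assms that by (intro mult_strict_mono') auto
    then show ?thesis by simp
  qed
  have nz2: "1 - t \<noteq> 0" if "t \<in> {0<..<1}" for t :: real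
  proof -
    have "t < 1" using that by simp
    then show ?thesis by simp
  qed
  have nz3: "(1+x)/2 \<noteq> 0" using assms by simp
  show ?thesis unfolding hx_def[abs_def] using nz nz2 nz3
    by (intro continuous_intros) auto
qed

lemma hx_le_g:
  assumes "0 < a" "a < 1" "0 \<le> x" "x < 1" "0 < t" "t < 1"
  shows "hx a x t \<le> t powr (a-1) * (1-t) powr (-a)"
proof -
  have d: "t \<le> 1-(1-t)*x"
  proof -
    have "(1-t)*x \<le> (1-t)*1" using assms by (intro mult_left_mono) auto
    then show ?thesis by simp
  qed
  have A: "((1+x)/2) powr a \<le> 1"
  proof -
    have "((1+x)/2) powr a \<le> 1 powr a" using assms by (intro powr_mono2) auto
    then show ?thesis by simp
  qed
  have B: "(1-(1-t)*x) powr (a-1) \<le> t powr (a-1)"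
    using assms d by (intro powr_mono2') auto
  have "hx a x t = ((1+x)/2) powr a * ((1-(1-t)*x) powr (a-1) * (1-t) powr (-a))"
    unfolding hx_def by (simp add: mult_ac)
  also have "\<dots> \<le> 1 * (t powr (a-1) * (1-t) powr (-a))"
    using A B by (intro mult_mono) auto
  finally show ?thesis by simp
qed

lemma hx_mono:
  assumes "0 < a" "a < 1" "0 \<le> x" "x \<le> y" "y < 1" "0 < t" "t < 1"
  shows "hx a x t \<le> hx a y t"
proof -
  have A: "((1+x)/2) powr a \<le> ((1+y)/2) powr a" using assms by (intro powr_mono2) auto
  have "(1-t)*y < 1*1" using assms by (intro mult_strict_mono') auto
  moreover have "(1-t)*x \<le> (1-t)*y" using assms by (intro mult_left_mono) auto
  ultimately have B: "(1-(1-t)*x) powr (a-1) \<le> (1-(1-t)*y) powr (a-1)"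
    using assms by (intro powr_mono2') auto
  show ?thesis unfolding hx_def using A B
    by (intro mult_mono) auto
qed

lemma g_int:
  assumes "0 < a" "a < 1"
  shows "((\<lambda>t. t powr (a-1) * (1-t) powr (-a)) has_integral pi / sin (a*pi)) {0<..<1}"
  using beta_int[OF assms] by (simp add: has_integral_Icc_iff_Ioo)

lemma hx_int:
  assumes "0 < a" "a < 1" "0 \<le> x" "x < 1"
  shows "hx a x integrable_on {0<..<1}"
proof (rule measurable_bounded_by_integrable_imp_integrable)
  show "hx a x \<in> borel_measurable (lebesgue_on {0<..<1})"
    by (rule continuous_imp_measurable_on_sets_lebesgue[OF hx_cont[OF assms(3,4)]]) simp
  show "(\<lambda>t. t powr (a-1) * (1-t) powr (-a)) integrable_on {0<..<1}"
    using g_int[OF assms(1,2)] by blast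
  show "norm (hx a x t) \<le> t powr (a-1) * (1-t) powr (-a)" if "t \<in> {0<..<1}" for t
    using hx_le_g[OF assms] hx_nonneg[of a x t] that by simp
  show "{0<..<(1::real)} \<in> sets lebesgue" by (intro sets_completionI_sets) simp
qed

lemma Hf0_val:
  assumes "0 < a" "a < 1" "0 \<le> x" "x < 1"
  shows "(1-x^2) powr a * cmod (hilbert_op (f0 a) (of_real x)) = integral {0<..<1} (hx a x)"
proof -
  define c where "c = (1-x^2) powr a"
  have "x^2 < 1^2" using assms by (intro power_strict_mono) auto
  then have cpos: "c > 0" unfolding c_def by simp
  define k where "k t = (1/(1-(1-t)*x)) * (2 powr (-a) * (1 - t/(1-(1-t)*x)) powr (-a))" for t
  define I where "I = integral {0<..<1} (hx a x)"
  have I0: "I \<ge> 0" unfolding I_def using hx_int[OF assms] hx_nonneg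
    by (intro integral_nonneg) auto
  have kv: "k t = hx a x t / c" if "t \<in> {0<..<1}" for t
    using hx_eq[OF assms(3,4), of t a] that cpos unfolding k_def c_def
    by (simp add: field_simps)
  have "((\<lambda>t. hx a x t / c) has_integral I / c) {0<..<1}"
    unfolding I_def by (intro has_integral_divide integrable_integral hx_int[OF assms])
  then have "(k has_integral I / c) {0<..<1}"
    by (rule has_integral_eq[rotated]) (simp add: kv)
  then have "((\<lambda>t. complex_of_real (k t)) has_integral of_real (I / c)) {0<..<1}"
    by (rule has_integral_of_real)
  moreover have "integral {0<..<1} (\<lambda>t. T_op t (f0 a) (of_real x)) = integral {0<..<1} (\<lambda>t. complex_of_real (k t))"
    by (rule integral_cong) (use assms in \<open>simp add: T_f0 k_def\<close>)
  moreover have "hilbert_op (f0 a) (of_real x) = integral {0<..<1} (\<lambda>t. T_op t (f0 a) (of_real x))"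
    unfolding hilbert_op_def by (rule integral_open_interval_real)
  ultimately have "hilbert_op (f0 a) (of_real x) = of_real (I / c)"
    by (simp add: integral_unique)
  then have "cmod (hilbert_op (f0 a) (of_real x)) = \<bar>I / c\<bar>" by (simp only: of_real_divide[symmetric] norm_of_real)
  then have "cmod (hilbert_op (f0 a) (of_real x)) = I / c" using I0 cpos by simp
  then show ?thesis unfolding c_def[symmetric] I_def[symmetric] using cpos by simp
qed




lemma lower:
  assumes "0 < a" "a < 1"
  shows "ereal (pi / sin (a*pi)) \<le> hilbert_norm a"
proof -
  define xs where "xs n = 1 - inverse (real (Suc (Suc n)))" for n
  define g where "g t = t powr (a-1) * (1-t) powr (-a)" for t :: real
  define S where "S = {0<..<(1::real)}"
  have xs01: "0 \<le> xs n" "xs n < 1" for n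
  proof -
    have "inverse (real (Suc (Suc n))) \<le> 1" by (simp add: inverse_le_1_iff)
    then show "0 \<le> xs n" unfolding xs_def by simp
    show "xs n < 1" unfolding xs_def by simp
  qed
  have xsmono: "xs n \<le> xs (Suc n)" for n
  proof -
    have "inverse (real (Suc (Suc (Suc n)))) \<le> inverse (real (Suc (Suc n)))"
      by (rule le_imp_inverse_le) auto
    then show ?thesis unfolding xs_def by simp
  qed
  have "(\<lambda>n. inverse (real (Suc (Suc n)))) \<longlonglongrightarrow> 0"
    by (rule LIMSEQ_Suc[OF LIMSEQ_inverse_real_of_nat])
  then have xslim: "xs \<longlonglongrightarrow> 1"
    unfolding xs_def[abs_def] using tendsto_diff[OF tendsto_const, of _ 0 sequentially 1] by simp
  have gI: "(g has_integral pi / sin (a*pi)) S" unfolding g_def[abs_def] S_def using g_int[OF assms] .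
  have hint: "hx a (xs n) integrable_on S" for n unfolding S_def using hx_int[OF assms xs01] .
  have hle: "integral S (hx a (xs n)) \<le> pi / sin (a*pi)" for n
  proof -
    have "integral S (hx a (xs n)) \<le> integral S g"
      using hint gI hx_le_g[OF assms xs01] unfolding S_def g_def
      by (intro integral_le) (auto simp: S_def)
    then show ?thesis using gI by (simp add: integral_unique)
  qed
  have hge: "integral S (hx a (xs n)) \<ge> 0" for n
    using hint hx_nonneg by (intro integral_nonneg) auto
  have mct: "g integrable_on S \<and> (\<lambda>k. integral S (hx a (xs k))) \<longlonglongrightarrow> integral S g"
  proof (rule monotone_convergence_increasing)
    show "hx a (xs k) integrable_on S" for k by (rule hint)
    show "hx a (xs k) t \<le> hx a (xs (Suc k)) t" if "t \<in> S" for k t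
      using that xs01 xsmono assms unfolding S_def by (intro hx_mono) auto
    show "(\<lambda>k. hx a (xs k) t) \<longlonglongrightarrow> g t" if "t \<in> S" for t
    proof -
      have t: "0 < t" "t < 1" using that unfolding S_def by auto
      have "(\<lambda>k. hx a (xs k) t) \<longlonglongrightarrow> ((1+1)/2) powr a * (1-t) powr (-a) * (1-(1-t)*1) powr (a-1)"
        unfolding hx_def using t by (intro tendsto_intros xslim) auto
      also have "((1+1)/2) powr a * (1-t) powr (-a) * (1-(1-t)*1) powr (a-1) = g t"
        unfolding g_def by simp
      finally show ?thesis .
    qed
    show "bounded (range (\<lambda>k. integral S (hx a (xs k))))"
      unfolding bounded_iff using hle hge by (intro exI[of _ "pi / sin (a*pi)"]) auto
  qed
  have lim: "(\<lambda>k. integral S (hx a (xs k))) \<longlonglongrightarrow> pi / sin (a*pi)"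
    using mct gI by (simp add: integral_unique)
  have each: "ereal (integral S (hx a (xs n))) \<le> hilbert_norm a" for n
  proof -
    define x where "x = xs n"
    have x: "0 \<le> x" "x < 1" unfolding x_def using xs01 by auto
    have "ereal ((1 - (cmod (complex_of_real x))^2) powr a * cmod (hilbert_op (f0 a) (of_real x)))
          \<le> kor_norm a (hilbert_op (f0 a))"
      unfolding kor_norm_def by (rule SUP_upper) (use x in simp)
    also have "kor_norm a (hilbert_op (f0 a)) \<le> hilbert_norm a"
      unfolding hilbert_norm_def using f0_kor[OF assms(1)] by (rule SUP_upper)
    finally have "ereal ((1 - (cmod (complex_of_real x))^2) powr a * cmod (hilbert_op (f0 a) (of_real x))) \<le> hilbert_norm a" .
    moreover have "(cmod (complex_of_real x))^2 = x^2" by simp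
    ultimately have "ereal ((1 - x^2) powr a * cmod (hilbert_op (f0 a) (of_real x))) \<le> hilbert_norm a" by simp
    then show ?thesis using Hf0_val[OF assms x] unfolding x_def S_def by simp
  qed
  show ?thesis
    by (rule LIMSEQ_le_const2[OF tendsto_ereal[OF lim]]) (use each in auto)
qed

theorem mainTheorem3:
  fixes \<alpha> :: real
  shows "(0 < \<alpha> \<and> \<alpha> \<le> 2/3 \<longrightarrow> hilbert_norm \<alpha> = ereal (pi / sin (\<alpha> * pi)))
       \<and> (2/3 < \<alpha> \<and> \<alpha> < 1 \<longrightarrow>
           hilbert_norm \<alpha> \<le> ereal (
             integral {0..(3*\<alpha> - 2)/(4*\<alpha> - 2)} (\<lambda>t. G_fun \<alpha> t (x0_fun \<alpha> t))
           + integral {(3*\<alpha> - 2)/(4*\<alpha> - 2)..1} (\<lambda>t. t powr (\<alpha> - 1) * (1 - t) powr (-\<alpha>))))"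
proof (intro conjI impI)
  assume a: "0 < \<alpha> \<and> \<alpha> \<le> 2/3"
  then have a1: "0 < \<alpha>" "\<alpha> < 1" by auto
  have be: "bnd \<alpha> = (\<lambda>t. t powr (\<alpha> - 1) * (1 - t) powr (-\<alpha>))"
    using a unfolding bnd_def by auto
  have bI: "(bnd \<alpha> has_integral pi / sin (\<alpha> * pi)) {0..1}"
    unfolding be using beta_int[OF a1] .
  have "hilbert_norm \<alpha> \<le> ereal (integral {0..1} (bnd \<alpha>))"
    using upper_general[OF a1] bI by blast
  also have "integral {0..1} (bnd \<alpha>) = pi / sin (\<alpha> * pi)" using bI by (rule integral_unique)
  finally have up: "hilbert_norm \<alpha> \<le> ereal (pi / sin (\<alpha> * pi))" .
  show "hilbert_norm \<alpha> = ereal (pi / sin (\<alpha> * pi))"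
    using up lower[OF a1] by (rule antisym)
next
  assume a: "2/3 < \<alpha> \<and> \<alpha> < 1"
  then have a1: "0 < \<alpha>" "\<alpha> < 1" and a2: "2/3 < \<alpha>" by auto
  define c where "c = (3*\<alpha> - 2)/(4*\<alpha> - 2)"
  have c: "0 < c" "c < 1" unfolding c_def using a by (auto simp: divide_less_eq)
  define IH where "IH = integral {0..c} (\<lambda>t. G_fun \<alpha> t (x0_fun \<alpha> t))"
  define Ig where "Ig = integral {c..1} (\<lambda>t. t powr (\<alpha> - 1) * (1 - t) powr (-\<alpha>))"
  have H1: "((\<lambda>t. G_fun \<alpha> t (x0_fun \<alpha> t)) has_integral IH) {0..c}"
    unfolding IH_def c_def using H_int[OF a2 a1(2)] by (rule integrable_integral)
  have H2: "(bnd \<alpha> has_integral IH) {0..c}"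
  proof (rule has_integral_spike[OF _ _ H1])
    show "negligible {c}" by simp
    show "bnd \<alpha> t = G_fun \<alpha> t (x0_fun \<alpha> t)" if "t \<in> {0..c} - {c}" for t
      using that a unfolding bnd_def c_def by auto
  qed
  have "(\<lambda>t. t powr (\<alpha> - 1) * (1 - t) powr (-\<alpha>)) integrable_on {0..1}"
    using beta_int[OF a1] by blast
  then have "(\<lambda>t. t powr (\<alpha> - 1) * (1 - t) powr (-\<alpha>)) integrable_on {c..1}"
    by (rule integrable_on_subinterval) (use c in auto)
  then have G1: "((\<lambda>t. t powr (\<alpha> - 1) * (1 - t) powr (-\<alpha>)) has_integral Ig) {c..1}"
    unfolding Ig_def by (rule integrable_integral)
  have G2: "(bnd \<alpha> has_integral Ig) {c..1}"
    by (rule has_integral_eq[OF _ G1]) (auto simp: bnd_def c_def)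
  have all: "(bnd \<alpha> has_integral IH + Ig) {0..1}"
    by (rule has_integral_combine[OF _ _ H2 G2]) (use c in auto)
  have "hilbert_norm \<alpha> \<le> ereal (integral {0..1} (bnd \<alpha>))"
    using upper_general[OF a1] all by blast
  also have "integral {0..1} (bnd \<alpha>) = IH + Ig" using all by (rule integral_unique)
  finally show "hilbert_norm \<alpha> \<le> ereal (
             integral {0..(3*\<alpha> - 2)/(4*\<alpha> - 2)} (\<lambda>t. G_fun \<alpha> t (x0_fun \<alpha> t))
           + integral {(3*\<alpha> - 2)/(4*\<alpha> - 2)..1} (\<lambda>t. t powr (\<alpha> - 1) * (1 - t) powr (-\<alpha>)))"
    unfolding IH_def Ig_def c_def .
qed


end
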